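(* For $a\in\mathbb{R}$, let $\mathfrak{g}_{a,1}$ be the $8$-dimensional real Lie algebra with a basis $\{e^1,\dots,e^8\}$ of its dual $\mathfrak{g}_{a,1}^*$ satisfying $$de^1=de^2=de^3=0,\quad de^4=e^{13},\quad de^5=e^{23},\quad de^6=3e^{14}+e^{25}-2e^{35},$$ $$de^7=2a\,e^{12}+e^{15}+e^{24}+2e^{34},\quad de^8=-2e^{14}+e^{16}-2e^{25}+e^{27}-2e^{45}.$$ Then the Lie algebras $\mathfrak{g}_{a,1}$, $a\in[0,\infty)$, are nilpotent, pairwise non-isomorphic, and each of them admits a complex structure.
   Context: Here $e^{ij}=e^i\wedge e^j$, and $d$ is the Chevalley–Eilenberg differential on $\bigwedge\mathfrak{g}^*$, determined by $d\alpha(X,Y)=-\alpha([X,Y])$ for $\alpha\in\mathfrak{g}^*$; the equations above define the Lie bracket. A complex structure on a real Lie algebra $\mathfrak{g}$ is an endomorphism $J:\mathfrak{g}\to\mathfrak{g}$ with $J^2=-\mathrm{Id}$ and vanishing Nijenhuis tensor $N_J(X,Y)=[X,Y]+J[JX,Y]+J[X,JY]-[JX,JY]=0$ for all $X,Y\in\mathfrak{g}$. *)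

theory Defs
  imports "HOL-Analysis.Analysis"
begin

text \<open>The Lie algebra g_{a,1} is modelled on real^8. Basis index k in {1..8}
  corresponds to the element (k-1) of the numeral type 8.\<close>

definition ix :: "nat \<Rightarrow> 8" where
  "ix k = of_nat (k - 1)"

definition ecov :: "nat \<Rightarrow> real^8 \<Rightarrow> real" where
  "ecov k x = x $ ix k"

definition evec :: "nat \<Rightarrow> real^8" where
  "evec k = axis (ix k) 1"

text \<open>cf a k i j = coefficient of e^{ij} (i<j) in d e^k for g_{a,1}.\<close>
definition cf :: "real \<Rightarrow> nat \<Rightarrow> nat \<Rightarrow> nat \<Rightarrow> real" where
  "cf a k i j =
    (if (k,i,j) = (4,1,3) then 1
     else if (k,i,j) = (5,2,3) then 1
     else if (k,i,j) = (6,1,4) then 3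
     else if (k,i,j) = (6,2,5) then 1
     else if (k,i,j) = (6,3,5) then -2
     else if (k,i,j) = (7,1,2) then 2 * a
     else if (k,i,j) = (7,1,5) then 1
     else if (k,i,j) = (7,2,4) then 1
     else if (k,i,j) = (7,3,4) then 2
     else if (k,i,j) = (8,1,4) then -2
     else if (k,i,j) = (8,1,6) then 1
     else if (k,i,j) = (8,2,5) then -2
     else if (k,i,j) = (8,2,7) then 1
     else if (k,i,j) = (8,4,5) then -2
     else 0)"

definition de :: "real \<Rightarrow> nat \<Rightarrow> real^8 \<Rightarrow> real^8 \<Rightarrow> real" where
  "de a k X Y = (\<Sum>i\<in>{1..8}. \<Sum>j\<in>{1..8}. if i < j then
       cf a k i j * (ecov i X * ecov j Y - ecov i Y * ecov j X) else 0)"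

text \<open>The Lie bracket determined by d alpha(X,Y) = - alpha([X,Y]).\<close>
definition br :: "real \<Rightarrow> real^8 \<Rightarrow> real^8 \<Rightarrow> real^8" where
  "br a X Y = (\<Sum>k\<in>{1..8}. (- de a k X Y) *\<^sub>R evec k)"

fun lcs :: "('v::real_vector \<Rightarrow> 'v \<Rightarrow> 'v) \<Rightarrow> nat \<Rightarrow> 'v set" where
  "lcs B 0 = UNIV"
| "lcs B (Suc n) = span {B x y | x y. y \<in> lcs B n}"

definition nilpotent_lie :: "('v::real_vector \<Rightarrow> 'v \<Rightarrow> 'v) \<Rightarrow> bool" where
  "nilpotent_lie B \<longleftrightarrow> (\<exists>n. lcs B n = {0})"

definition lie_isomorphic :: "('v::real_vector \<Rightarrow> 'v \<Rightarrow> 'v) \<Rightarrow> ('w::real_vector \<Rightarrow> 'w \<Rightarrow> 'w) \<Rightarrow> bool" where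
  "lie_isomorphic B C \<longleftrightarrow> (\<exists>f. linear f \<and> bij f \<and> (\<forall>x y. f (B x y) = C (f x) (f y)))"

definition nijenhuis :: "('v::real_vector \<Rightarrow> 'v \<Rightarrow> 'v) \<Rightarrow> ('v \<Rightarrow> 'v) \<Rightarrow> 'v \<Rightarrow> 'v \<Rightarrow> 'v" where
  "nijenhuis B J X Y = B X Y + J (B (J X) Y) + J (B X (J Y)) - B (J X) (J Y)"

definition complex_structure :: "('v::real_vector \<Rightarrow> 'v \<Rightarrow> 'v) \<Rightarrow> ('v \<Rightarrow> 'v) \<Rightarrow> bool" where
  "complex_structure B J \<longleftrightarrow> linear J \<and> (\<forall>x. J (J x) = - x) \<and> (\<forall>X Y. nijenhuis B J X Y = 0)"

end

theory Submission
  imports Defs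
begin


lemma exhaust_8:
  fixes x :: 8
  shows "x = 0 \<or> x = 1 \<or> x = 2 \<or> x = 3 \<or> x = 4 \<or> x = 5 \<or> x = 6 \<or> x = 7"
proof (induct x)
  case (of_int z)
  then have "z = 0 \<or> z = 1 \<or> z = 2 \<or> z = 3 \<or> z = 4 \<or> z = 5 \<or> z = 6 \<or> z = 7" by fastforce
  then show ?case by auto
qed

lemma ix_vals: "ix 1 = 0" "ix 2 = 1" "ix 3 = 2" "ix 4 = 3" "ix 5 = 4" "ix 6 = 5" "ix 7 = 6" "ix 8 = 7"
  by (simp_all add: ix_def)

lemma sum8: "(\<Sum>i\<in>{1..8::nat}. g i) = g 1 + g 2 + g 3 + g 4 + g 5 + g 6 + g 7 + g 8"
  by (simp add: numeral_eq_Suc sum.atLeast_Suc_atMost add.assoc)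

lemma vec8_eqI:
  fixes v w :: "real^8"
  assumes "ecov 1 v = ecov 1 w" "ecov 2 v = ecov 2 w" "ecov 3 v = ecov 3 w" "ecov 4 v = ecov 4 w"
    "ecov 5 v = ecov 5 w" "ecov 6 v = ecov 6 w" "ecov 7 v = ecov 7 w" "ecov 8 v = ecov 8 w"
  shows "v = w"
  unfolding vec_eq_iff
proof
  fix i :: 8
  show "v $ i = w $ i"
    using exhaust_8[of i] assms by (auto simp: ecov_def ix_def)
qed

lemma ecov_simps[simp]:
  "ecov k (x + y) = ecov k x + ecov k y"
  "ecov k (x - y) = ecov k x - ecov k y"
  "ecov k (- x) = - ecov k x"
  "ecov k (c *\<^sub>R x) = c * ecov k x"
  "ecov k 0 = 0"
  by (simp_all add: ecov_def)

lemma ecov_sum: "ecov k (\<Sum>i\<in>A. g i) = (\<Sum>i\<in>A. ecov k (g i))"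
  by (simp add: ecov_def sum_component)

lemma ecov_evec: "ecov k (evec j) = (if ix k = ix j then 1 else 0)"
  by (simp add: ecov_def evec_def axis_def)

lemma de123: "de a 1 X Y = 0" "de a 2 X Y = 0" "de a 3 X Y = 0"
  unfolding de_def sum8 by (simp_all add: cf_def)

lemma de4: "de a 4 X Y = ecov 1 X * ecov 3 Y - ecov 1 Y * ecov 3 X"
  unfolding de_def sum8 by (simp add: cf_def)
lemma de5: "de a 5 X Y = ecov 2 X * ecov 3 Y - ecov 2 Y * ecov 3 X"
  unfolding de_def sum8 by (simp add: cf_def)
lemma de6: "de a 6 X Y = 3 * (ecov 1 X * ecov 4 Y - ecov 1 Y * ecov 4 X)
   + (ecov 2 X * ecov 5 Y - ecov 2 Y * ecov 5 X) - 2 * (ecov 3 X * ecov 5 Y - ecov 3 Y * ecov 5 X)"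
  unfolding de_def sum8 by (simp add: cf_def)
lemma de7: "de a 7 X Y = 2 * a * (ecov 1 X * ecov 2 Y - ecov 1 Y * ecov 2 X)
   + (ecov 1 X * ecov 5 Y - ecov 1 Y * ecov 5 X) + (ecov 2 X * ecov 4 Y - ecov 2 Y * ecov 4 X)
   + 2 * (ecov 3 X * ecov 4 Y - ecov 3 Y * ecov 4 X)"
  unfolding de_def sum8 by (simp add: cf_def)
lemma de8: "de a 8 X Y = -2 * (ecov 1 X * ecov 4 Y - ecov 1 Y * ecov 4 X)
   + (ecov 1 X * ecov 6 Y - ecov 1 Y * ecov 6 X) - 2 * (ecov 2 X * ecov 5 Y - ecov 2 Y * ecov 5 X)
   + (ecov 2 X * ecov 7 Y - ecov 2 Y * ecov 7 X) - 2 * (ecov 4 X * ecov 5 Y - ecov 4 Y * ecov 5 X)"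
  unfolding de_def sum8 by (simp add: cf_def)

lemmas de_all = de123 de4 de5 de6 de7 de8

lemma br_comp: "ecov r (br a X Y) = (\<Sum>k\<in>{1..8}. - de a k X Y * ecov r (evec k))"
  by (simp add: br_def ecov_sum)

lemma br_c: "ecov 1 (br a X Y) = - de a 1 X Y" "ecov 2 (br a X Y) = - de a 2 X Y"
  "ecov 3 (br a X Y) = - de a 3 X Y" "ecov 4 (br a X Y) = - de a 4 X Y"
  "ecov 5 (br a X Y) = - de a 5 X Y" "ecov 6 (br a X Y) = - de a 6 X Y"
  "ecov 7 (br a X Y) = - de a 7 X Y" "ecov 8 (br a X Y) = - de a 8 X Y"
  by (simp_all only: br_comp sum8 ecov_evec ix_vals) simp_all



lemma alg:
  fixes a b m11v m12v m13v m21v m22v m23v m31v m32v m33v m41v m42v m43v m44v m45v m51v m52v m53v m54v m55v m64v m65v m66v m67v m74v m75v m76v m77v m86v m87v m88v :: real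
  assumes h12_4: "- m11v * m32v + m12v * m31v = 0"
  and h12_5: "- m21v * m32v + m22v * m31v = 0"
  and h12_6: "2 * a * m67v - 3 * m11v * m42v + 3 * m12v * m41v - m21v * m52v + m22v * m51v + 2 * m31v * m52v - 2 * m32v * m51v = 0"
  and h12_7: "2 * a * m77v - 2 * b * m11v * m22v + 2 * b * m12v * m21v - m11v * m52v + m12v * m51v - m21v * m42v + m22v * m41v - 2 * m31v * m42v + 2 * m32v * m41v = 0"
  and h13_4: "- m11v * m33v + m13v * m31v + m44v = 0"
  and h13_5: "- m21v * m33v + m23v * m31v + m54v = 0"
  and h13_6: "-3 * m11v * m43v + 3 * m13v * m41v - m21v * m53v + m23v * m51v + 2 * m31v * m53v - 2 * m33v * m51v + m64v = 0"
  and h13_7: "-2 * b * m11v * m23v + 2 * b * m13v * m21v - m11v * m53v + m13v * m51v - m21v * m43v + m23v * m41v - 2 * m31v * m43v + 2 * m33v * m41v + m74v = 0"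
  and h14_6: "-3 * m11v * m44v - m21v * m54v + 2 * m31v * m54v + 3 * m66v = 0"
  and h14_7: "- m11v * m54v - m21v * m44v - 2 * m31v * m44v + 3 * m76v = 0"
  and h14_8: "2 * m11v * m44v - m11v * m64v + 2 * m21v * m54v - m21v * m74v + 2 * m41v * m54v - 2 * m44v * m51v + 3 * m86v - 2 * m88v = 0"
  and h15_6: "-3 * m11v * m45v - m21v * m55v + 2 * m31v * m55v + m67v = 0"
  and h15_7: "- m11v * m55v - m21v * m45v - 2 * m31v * m45v + m77v = 0"
  and h15_8: "2 * m11v * m45v - m11v * m65v + 2 * m21v * m55v - m21v * m75v + 2 * m41v * m55v - 2 * m45v * m51v + m87v = 0"
  and h16_8: "- m11v * m66v - m21v * m76v + m88v = 0"
  and h17_8: "- m11v * m67v - m21v * m77v = 0"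
  and h23_4: "- m12v * m33v + m13v * m32v + m45v = 0"
  and h23_5: "- m22v * m33v + m23v * m32v + m55v = 0"
  and h23_6: "-3 * m12v * m43v + 3 * m13v * m42v - m22v * m53v + m23v * m52v + 2 * m32v * m53v - 2 * m33v * m52v + m65v = 0"
  and h23_7: "-2 * b * m12v * m23v + 2 * b * m13v * m22v - m12v * m53v + m13v * m52v - m22v * m43v + m23v * m42v - 2 * m32v * m43v + 2 * m33v * m42v + m75v = 0"
  and h24_6: "-3 * m12v * m44v - m22v * m54v + 2 * m32v * m54v + m67v = 0"
  and h24_7: "- m12v * m54v - m22v * m44v - 2 * m32v * m44v + m77v = 0"
  and h24_8: "2 * m12v * m44v - m12v * m64v + 2 * m22v * m54v - m22v * m74v + 2 * m42v * m54v - 2 * m44v * m52v + m87v = 0"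
  and h25_6: "-3 * m12v * m45v - m22v * m55v + 2 * m32v * m55v + m66v = 0"
  and h25_7: "- m12v * m55v - m22v * m45v - 2 * m32v * m45v + m76v = 0"
  and h25_8: "2 * m12v * m45v - m12v * m65v + 2 * m22v * m55v - m22v * m75v + 2 * m42v * m55v - 2 * m45v * m52v + m86v - 2 * m88v = 0"
  and h26_8: "- m12v * m66v - m22v * m76v = 0"
  and h27_8: "- m12v * m67v - m22v * m77v + m88v = 0"
  and h34_6: "-3 * m13v * m44v - m23v * m54v + 2 * m33v * m54v + 2 * m67v = 0"
  and h34_7: "- m13v * m54v - m23v * m44v - 2 * m33v * m44v + 2 * m77v = 0"
  and h34_8: "2 * m13v * m44v - m13v * m64v + 2 * m23v * m54v - m23v * m74v + 2 * m43v * m54v - 2 * m44v * m53v + 2 * m87v = 0"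
  and h35_6: "-3 * m13v * m45v - m23v * m55v + 2 * m33v * m55v - 2 * m66v = 0"
  and h35_7: "- m13v * m55v - m23v * m45v - 2 * m33v * m45v - 2 * m76v = 0"
  and h35_8: "2 * m13v * m45v - m13v * m65v + 2 * m23v * m55v - m23v * m75v + 2 * m43v * m55v - 2 * m45v * m53v - 2 * m86v = 0"
  and h36_8: "- m13v * m66v - m23v * m76v = 0"
  and h37_8: "- m13v * m67v - m23v * m77v = 0"
  and h45_8: "2 * m44v * m55v - 2 * m45v * m54v - 2 * m88v = 0"
  and d: "m88v \<noteq> 0" and a0: "a \<ge> 0" and b0: "b \<ge> 0"
  shows "a = b"
proof -
  have dC: "(m11v*m22v - m12v*m21v) * (m66v*m77v - m67v*m76v) = m88v^2"
    using h16_8 h17_8 h26_8 h27_8 by algebra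
  have detC: "m66v*m77v - m67v*m76v \<noteq> 0" and detP0: "m11v*m22v - m12v*m21v \<noteq> 0"
    using dC d by auto
  have "m13v * (m66v*m77v - m67v*m76v) = 0" using h36_8 h37_8 by algebra
  hence z13: "m13v = 0" using detC by simp
  have "m23v * (m66v*m77v - m67v*m76v) = 0" using h36_8 h37_8 by algebra
  hence z23: "m23v = 0" using detC by simp
  have e44: "m44v = m11v*m33v" using h13_4 z13 by simp
  have e54: "m54v = m21v*m33v" using h13_5 z23 by simp
  have e45: "m45v = m12v*m33v" using h23_4 z13 by simp
  have e55: "m55v = m22v*m33v" using h23_5 z23 by simp
  have d2: "m88v = m33v^2 * (m11v*m22v - m12v*m21v)"
    using h45_8 e44 e54 e45 e55 by algebra
  have t0: "m33v \<noteq> 0" using d d2 by auto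
  have "m31v * (m11v*m22v - m12v*m21v) = 0" using h12_4 h12_5 by algebra
  hence z31: "m31v = 0" using detP0 by simp
  have "m32v * (m11v*m22v - m12v*m21v) = 0" using h12_4 h12_5 by algebra
  hence z32: "m32v = 0" using detP0 by simp
  have e67: "m67v = - m33v*m54v" using h34_6 z13 z23 by simp
  have e77: "m77v = m33v*m44v" using h34_7 z13 z23 by simp
  have e66: "m66v = m33v*m55v" using h35_6 z13 z23 by simp
  have e76: "m76v = - m33v*m45v" using h35_7 z13 z23 by simp
  have "m33v * (m33v * (m12v * (m33v + 2*m22v))) = 0"
    using h25_7 z32 e76 e45 e55 by algebra
  hence v6: "m12v * (m33v + 2*m22v) = 0" using t0 by simp
  have "m33v * (m33v * (m33v*m22v - 3*m12v^2 - m22v^2)) = 0"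
    using h25_6 z32 e66 e45 e55 by algebra
  hence v5: "m33v*m22v - 3*m12v^2 - m22v^2 = 0" using t0 by simp
  have y0: "m12v = 0"
  proof (rule ccontr)
    assume "m12v \<noteq> 0"
    hence "m33v + 2*m22v = 0" using v6 by simp
    hence w: "m22v = - m33v/2" by simp
    have "3 * m12v^2 + (3/4)*m33v^2 = 0" using v5 unfolding w by algebra
    moreover have "m33v^2 > 0" using t0 by simp
    moreover have "m12v^2 \<ge> 0" by simp
    ultimately show False by linarith
  qed
  have x0: "m11v \<noteq> 0" and w0: "m22v \<noteq> 0" using detP0 y0 by auto
  have "m33v * (m33v * (m11v * m21v)) = 0"
    using h14_7 z31 y0 e76 e45 e54 e44 by algebra
  hence z0: "m21v = 0" using t0 x0 by simp
  have "m22v * (m33v - m22v) = 0" using v5 y0 by algebra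
  hence wt: "m22v = m33v" using w0 by simp
  have "m33v * (m33v^2 - m11v^2) = 0"
    using h14_6 z31 z0 wt e66 e55 e44 e54 by algebra
  hence xt: "m11v^2 = m33v^2" using t0 by simp
  have K1: "m33v * m33v * (m11v*m52v - m33v*m41v) = 0"
    using h15_8 h23_6 h34_8 z13 z23 z31 z32 y0 z0 wt e44 e54 e45 e55 by algebra
  have K1': "m11v*m52v = m33v*m41v" using K1 t0 by simp
  have K3: "m33v * m33v * (m33v + 2*m42v - m11v*m33v) = 0"
    using h25_8 h23_7 h35_8 d2 z13 z23 z31 z32 y0 z0 wt e44 e54 e45 e55 by algebra
  have K3': "m33v + 2*m42v - m11v*m33v = 0" using K3 t0 by simp
  have K4: "m33v * m51v = 3 * m11v * m42v"
    using h12_6 e67 e54 z0 z31 z32 y0 wt by algebra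
  have K2: "m33v * (m33v^2 - 2*m11v*m51v - m11v*m33v^2) = 0"
    using h14_8 h13_6 h35_8 d2 xt z13 z23 z31 z32 y0 z0 wt e44 e54 e45 e55 by algebra
  have K2': "m33v^2 - 2*m11v*m51v - m11v*m33v^2 = 0" using K2 t0 by simp
  have "m33v^2 * (m11v - 1) = 0"
    using K2' K3' K4 xt t0 by algebra
  hence x1: "m11v = 1" using t0 by simp
  have t1: "m33v^2 = 1" using xt x1 by simp
  have "2 * a * m33v^2 - 2 * b * m33v = 0"
    using h12_7 K1' x1 y0 z0 z31 z32 wt e77 e44 by algebra
  hence "a = b * m33v" using t1 by algebra
  moreover have "m33v = 1 \<or> m33v = -1" using t1 by (metis power2_eq_1_iff)
  ultimately show ?thesis using a0 b0 by auto
qed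



definition Z :: "nat set \<Rightarrow> (real^8) set" where "Z I = {x. \<forall>k\<in>I. ecov k x = 0}"

lemma subspace_Z: "subspace (Z I)"
  by (auto simp: subspace_def Z_def)

lemma lcs1: "lcs (br a) (Suc 0) \<subseteq> Z {1,2,3}"
  by (simp only: lcs.simps, intro span_minimal subspace_Z) (auto simp: Z_def br_c de_all br_c[simplified] de_all[simplified])

lemma lcs2: "lcs (br a) (Suc (Suc 0)) \<subseteq> Z {1,2,3,4,5}"
proof -
  have "lcs (br a) (Suc (Suc 0)) = span {br a x y | x y. y \<in> lcs (br a) (Suc 0)}" by simp
  also have "\<dots> \<subseteq> Z {1,2,3,4,5}"
    using lcs1[of a] by (intro span_minimal subspace_Z) (auto simp: Z_def br_c de_all br_c[simplified] de_all[simplified])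
  finally show ?thesis .
qed

lemma lcs3: "lcs (br a) (Suc (Suc (Suc 0))) \<subseteq> Z {1,2,3,4,5,6,7}"
proof -
  have "lcs (br a) (Suc (Suc (Suc 0))) = span {br a x y | x y. y \<in> lcs (br a) (Suc (Suc 0))}" by simp
  also have "\<dots> \<subseteq> Z {1,2,3,4,5,6,7}"
    using lcs2[of a] by (intro span_minimal subspace_Z) (auto simp: Z_def br_c de_all br_c[simplified] de_all[simplified])
  finally show ?thesis .
qed

lemma lcs4: "lcs (br a) (Suc (Suc (Suc (Suc 0)))) \<subseteq> Z {1,2,3,4,5,6,7,8}"
proof -
  have "lcs (br a) (Suc (Suc (Suc (Suc 0)))) = span {br a x y | x y. y \<in> lcs (br a) (Suc (Suc (Suc 0)))}" by simp
  also have "\<dots> \<subseteq> Z {1,2,3,4,5,6,7,8}"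
    using lcs3[of a] by (intro span_minimal subspace_Z) (auto simp: Z_def br_c de_all br_c[simplified] de_all[simplified])
  finally show ?thesis .
qed

lemma Z_all: "Z {1,2,3,4,5,6,7,8} = {0}"
proof
  show "Z {1,2,3,4,5,6,7,8} \<subseteq> {0}"
  proof
    fix x assume "x \<in> Z {1,2,3,4,5,6,7,8}"
    hence "x = 0" by (intro vec8_eqI) (auto simp: Z_def)
    thus "x \<in> {0}" by simp
  qed
qed (simp add: Z_def)

lemma nilp: "nilpotent_lie (br a)"
  unfolding nilpotent_lie_def
proof (rule exI[of _ "Suc (Suc (Suc (Suc 0)))"])
  have "0 \<in> lcs (br a) (Suc (Suc (Suc (Suc 0))))" by (simp add: span_zero)
  thus "lcs (br a) (Suc (Suc (Suc (Suc 0)))) = {0}" using lcs4[of a] Z_all by blast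
qed

lemma lcs_image:
  assumes lin: "linear f" and hom: "\<forall>x y. f (A x y) = B (f x) (f y)"
  shows "f ` lcs A n \<subseteq> lcs B n"
proof (induction n)
  case 0 then show ?case by simp
next
  case (Suc n)
  have "f ` lcs A (Suc n) = span (f ` {A x y | x y. y \<in> lcs A n})"
    by (simp add: linear_span_image[OF lin])
  also have "\<dots> \<subseteq> lcs B (Suc n)"
    unfolding lcs.simps
  proof (rule span_mono)
    show "f ` {A x y | x y. y \<in> lcs A n} \<subseteq> {B x y | x y. y \<in> lcs B n}"
      using Suc.IH hom by blast
  qed
  finally show ?case .
qed

lemma br_cr: "r \<in> {1..8} \<Longrightarrow> ecov r (br a X Y) = - de a r X Y"
proof -
  assume "r \<in> {1..8}"
  hence "r = 1 \<or> r = 2 \<or> r = 3 \<or> r = 4 \<or> r = 5 \<or> r = 6 \<or> r = 7 \<or> r = 8" by auto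
  thus ?thesis using br_c by auto
qed

lemma hom_comp:
  assumes lin: "linear f" and hom: "\<forall>x y. f (br a x y) = br b (f x) (f y)" and r: "r \<in> {1..8}"
  shows "(\<Sum>k\<in>{1..8}. - de a k X Y * ecov r (f (evec k))) = - de b r (f X) (f Y)"
proof -
  have "f (br a X Y) = (\<Sum>k\<in>{1..8}. (- de a k X Y) *\<^sub>R f (evec k))"
    unfolding br_def by (simp add: linear_sum[OF lin] linear_scale[OF lin] linear_neg[OF lin] o_def)
  hence "ecov r (f (br a X Y)) = (\<Sum>k\<in>{1..8}. - de a k X Y * ecov r (f (evec k)))"
    by (simp add: ecov_sum)
  moreover have "ecov r (f (br a X Y)) = - de b r (f X) (f Y)"
    using hom br_cr[OF r] by simp
  ultimately show ?thesis by simp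
qed

lemma ev4: "evec 4 \<in> lcs (br a) (Suc 0)"
proof -
  have "evec 4 = br a (evec 3) (evec 1)"
    by (rule vec8_eqI) (simp_all add: br_c de_all br_c[simplified] de_all[simplified] ecov_evec ix_def)
  thus ?thesis by (auto intro!: span_base)
qed
lemma ev5: "evec 5 \<in> lcs (br a) (Suc 0)"
proof -
  have "evec 5 = br a (evec 3) (evec 2)"
    by (rule vec8_eqI) (simp_all add: br_c de_all br_c[simplified] de_all[simplified] ecov_evec ix_def)
  thus ?thesis by (auto intro!: span_base)
qed
lemma ev6: "evec 6 \<in> lcs (br a) (Suc (Suc 0))"
proof -
  have e: "evec 6 = (1/2) *\<^sub>R br a (evec 3) (evec 5)"
    by (rule vec8_eqI) (simp_all add: br_c de_all br_c[simplified] de_all[simplified] ecov_evec ix_def)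
  have "br a (evec 3) (evec 5) \<in> lcs (br a) (Suc (Suc 0))"
    using ev5[of a] by (auto intro!: span_base)
  thus ?thesis unfolding e lcs.simps by (rule span_scale)
qed
lemma ev7: "evec 7 \<in> lcs (br a) (Suc (Suc 0))"
proof -
  have e: "evec 7 = (-1) *\<^sub>R br a (evec 1) (evec 5)"
    by (rule vec8_eqI) (simp_all add: br_c de_all br_c[simplified] de_all[simplified] ecov_evec ix_def)
  have "br a (evec 1) (evec 5) \<in> lcs (br a) (Suc (Suc 0))"
    using ev5[of a] by (auto intro!: span_base)
  thus ?thesis unfolding e lcs.simps by (rule span_scale)
qed
lemma ev8: "evec 8 \<in> lcs (br a) (Suc (Suc (Suc 0)))"
proof -
  have e: "evec 8 = (-1) *\<^sub>R br a (evec 1) (evec 6)"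
    by (rule vec8_eqI) (simp_all add: br_c de_all br_c[simplified] de_all[simplified] ecov_evec ix_def)
  have "br a (evec 1) (evec 6) \<in> lcs (br a) (Suc (Suc (Suc 0)))"
    using ev6[of a] by (auto intro!: span_base)
  thus ?thesis unfolding e lcs.simps by (rule span_scale)
qed

lemma noniso:
  assumes a0: "a \<ge> 0" and b0: "b \<ge> 0" and iso: "lie_isomorphic (br a) (br b)"
  shows "a = b"
proof -
  obtain f where lin: "linear f" and bj: "bij f" and hom: "\<forall>x y. f (br a x y) = br b (f x) (f y)"
    using iso unfolding lie_isomorphic_def by blast
  have im: "\<And>n. f ` lcs (br a) n \<subseteq> lcs (br b) n" using lcs_image[OF lin hom] .
  have f4: "f (evec 4) \<in> Z {1,2,3}" using im[of "Suc 0"] ev4[of a] lcs1[of b] by blast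
  have f5: "f (evec 5) \<in> Z {1,2,3}" using im[of "Suc 0"] ev5[of a] lcs1[of b] by blast
  have f6: "f (evec 6) \<in> Z {1,2,3,4,5}" using im[of "Suc (Suc 0)"] ev6[of a] lcs2[of b] by blast
  have f7: "f (evec 7) \<in> Z {1,2,3,4,5}" using im[of "Suc (Suc 0)"] ev7[of a] lcs2[of b] by blast
  have f8: "f (evec 8) \<in> Z {1,2,3,4,5,6,7}" using im[of "Suc (Suc (Suc 0))"] ev8[of a] lcs3[of b] by blast
  note zs = f4[unfolded Z_def, simplified] f5[unfolded Z_def, simplified] f6[unfolded Z_def, simplified]
    f7[unfolded Z_def, simplified] f8[unfolded Z_def, simplified]
  define M where "M p q = ecov p (f (evec q))" for p q
  have d: "M 8 8 \<noteq> 0"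
  proof
    assume "M 8 8 = 0"
    hence "f (evec 8) = 0" using zs unfolding M_def by (intro vec8_eqI) simp_all
    hence "f (evec 8) = f 0" using linear_0[OF lin] by simp
    hence "evec 8 = 0" using bj unfolding bij_def inj_def by blast
    hence "ecov 8 (evec 8) = 0" by simp
    thus False by (simp add: ecov_evec)
  qed
  have h12_4: "- M 1 1 * M 3 2 + M 1 2 * M 3 1 = 0"
    using hom_comp[OF lin hom, of 4 "evec 1" "evec 2"] unfolding M_def sum8
    by (simp add: sum8 de_all de_all[simplified] ecov_evec ix_def zs algebra_simps)
  have h12_5: "- M 2 1 * M 3 2 + M 2 2 * M 3 1 = 0"
    using hom_comp[OF lin hom, of 5 "evec 1" "evec 2"] unfolding M_def sum8
    by (simp add: sum8 de_all de_all[simplified] ecov_evec ix_def zs algebra_simps)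
  have h12_6: "2 * a * M 6 7 - 3 * M 1 1 * M 4 2 + 3 * M 1 2 * M 4 1 - M 2 1 * M 5 2 + M 2 2 * M 5 1 + 2 * M 3 1 * M 5 2 - 2 * M 3 2 * M 5 1 = 0"
    using hom_comp[OF lin hom, of 6 "evec 1" "evec 2"] unfolding M_def sum8
    by (simp add: sum8 de_all de_all[simplified] ecov_evec ix_def zs algebra_simps)
  have h12_7: "2 * a * M 7 7 - 2 * b * M 1 1 * M 2 2 + 2 * b * M 1 2 * M 2 1 - M 1 1 * M 5 2 + M 1 2 * M 5 1 - M 2 1 * M 4 2 + M 2 2 * M 4 1 - 2 * M 3 1 * M 4 2 + 2 * M 3 2 * M 4 1 = 0"
    using hom_comp[OF lin hom, of 7 "evec 1" "evec 2"] unfolding M_def sum8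
    by (simp add: sum8 de_all de_all[simplified] ecov_evec ix_def zs algebra_simps)
  have h13_4: "- M 1 1 * M 3 3 + M 1 3 * M 3 1 + M 4 4 = 0"
    using hom_comp[OF lin hom, of 4 "evec 1" "evec 3"] unfolding M_def sum8
    by (simp add: sum8 de_all de_all[simplified] ecov_evec ix_def zs algebra_simps)
  have h13_5: "- M 2 1 * M 3 3 + M 2 3 * M 3 1 + M 5 4 = 0"
    using hom_comp[OF lin hom, of 5 "evec 1" "evec 3"] unfolding M_def sum8
    by (simp add: sum8 de_all de_all[simplified] ecov_evec ix_def zs algebra_simps)
  have h13_6: "-3 * M 1 1 * M 4 3 + 3 * M 1 3 * M 4 1 - M 2 1 * M 5 3 + M 2 3 * M 5 1 + 2 * M 3 1 * M 5 3 - 2 * M 3 3 * M 5 1 + M 6 4 = 0"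
    using hom_comp[OF lin hom, of 6 "evec 1" "evec 3"] unfolding M_def sum8
    by (simp add: sum8 de_all de_all[simplified] ecov_evec ix_def zs algebra_simps)
  have h13_7: "-2 * b * M 1 1 * M 2 3 + 2 * b * M 1 3 * M 2 1 - M 1 1 * M 5 3 + M 1 3 * M 5 1 - M 2 1 * M 4 3 + M 2 3 * M 4 1 - 2 * M 3 1 * M 4 3 + 2 * M 3 3 * M 4 1 + M 7 4 = 0"
    using hom_comp[OF lin hom, of 7 "evec 1" "evec 3"] unfolding M_def sum8
    by (simp add: sum8 de_all de_all[simplified] ecov_evec ix_def zs algebra_simps)
  have h14_6: "-3 * M 1 1 * M 4 4 - M 2 1 * M 5 4 + 2 * M 3 1 * M 5 4 + 3 * M 6 6 = 0"
    using hom_comp[OF lin hom, of 6 "evec 1" "evec 4"] unfolding M_def sum8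
    by (simp add: sum8 de_all de_all[simplified] ecov_evec ix_def zs algebra_simps)
  have h14_7: "- M 1 1 * M 5 4 - M 2 1 * M 4 4 - 2 * M 3 1 * M 4 4 + 3 * M 7 6 = 0"
    using hom_comp[OF lin hom, of 7 "evec 1" "evec 4"] unfolding M_def sum8
    by (simp add: sum8 de_all de_all[simplified] ecov_evec ix_def zs algebra_simps)
  have h14_8: "2 * M 1 1 * M 4 4 - M 1 1 * M 6 4 + 2 * M 2 1 * M 5 4 - M 2 1 * M 7 4 + 2 * M 4 1 * M 5 4 - 2 * M 4 4 * M 5 1 + 3 * M 8 6 - 2 * M 8 8 = 0"
    using hom_comp[OF lin hom, of 8 "evec 1" "evec 4"] unfolding M_def sum8
    by (simp add: sum8 de_all de_all[simplified] ecov_evec ix_def zs algebra_simps)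
  have h15_6: "-3 * M 1 1 * M 4 5 - M 2 1 * M 5 5 + 2 * M 3 1 * M 5 5 + M 6 7 = 0"
    using hom_comp[OF lin hom, of 6 "evec 1" "evec 5"] unfolding M_def sum8
    by (simp add: sum8 de_all de_all[simplified] ecov_evec ix_def zs algebra_simps)
  have h15_7: "- M 1 1 * M 5 5 - M 2 1 * M 4 5 - 2 * M 3 1 * M 4 5 + M 7 7 = 0"
    using hom_comp[OF lin hom, of 7 "evec 1" "evec 5"] unfolding M_def sum8
    by (simp add: sum8 de_all de_all[simplified] ecov_evec ix_def zs algebra_simps)
  have h15_8: "2 * M 1 1 * M 4 5 - M 1 1 * M 6 5 + 2 * M 2 1 * M 5 5 - M 2 1 * M 7 5 + 2 * M 4 1 * M 5 5 - 2 * M 4 5 * M 5 1 + M 8 7 = 0"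
    using hom_comp[OF lin hom, of 8 "evec 1" "evec 5"] unfolding M_def sum8
    by (simp add: sum8 de_all de_all[simplified] ecov_evec ix_def zs algebra_simps)
  have h16_8: "- M 1 1 * M 6 6 - M 2 1 * M 7 6 + M 8 8 = 0"
    using hom_comp[OF lin hom, of 8 "evec 1" "evec 6"] unfolding M_def sum8
    by (simp add: sum8 de_all de_all[simplified] ecov_evec ix_def zs algebra_simps)
  have h17_8: "- M 1 1 * M 6 7 - M 2 1 * M 7 7 = 0"
    using hom_comp[OF lin hom, of 8 "evec 1" "evec 7"] unfolding M_def sum8
    by (simp add: sum8 de_all de_all[simplified] ecov_evec ix_def zs algebra_simps)
  have h23_4: "- M 1 2 * M 3 3 + M 1 3 * M 3 2 + M 4 5 = 0"
    using hom_comp[OF lin hom, of 4 "evec 2" "evec 3"] unfolding M_def sum8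
    by (simp add: sum8 de_all de_all[simplified] ecov_evec ix_def zs algebra_simps)
  have h23_5: "- M 2 2 * M 3 3 + M 2 3 * M 3 2 + M 5 5 = 0"
    using hom_comp[OF lin hom, of 5 "evec 2" "evec 3"] unfolding M_def sum8
    by (simp add: sum8 de_all de_all[simplified] ecov_evec ix_def zs algebra_simps)
  have h23_6: "-3 * M 1 2 * M 4 3 + 3 * M 1 3 * M 4 2 - M 2 2 * M 5 3 + M 2 3 * M 5 2 + 2 * M 3 2 * M 5 3 - 2 * M 3 3 * M 5 2 + M 6 5 = 0"
    using hom_comp[OF lin hom, of 6 "evec 2" "evec 3"] unfolding M_def sum8
    by (simp add: sum8 de_all de_all[simplified] ecov_evec ix_def zs algebra_simps)
  have h23_7: "-2 * b * M 1 2 * M 2 3 + 2 * b * M 1 3 * M 2 2 - M 1 2 * M 5 3 + M 1 3 * M 5 2 - M 2 2 * M 4 3 + M 2 3 * M 4 2 - 2 * M 3 2 * M 4 3 + 2 * M 3 3 * M 4 2 + M 7 5 = 0"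
    using hom_comp[OF lin hom, of 7 "evec 2" "evec 3"] unfolding M_def sum8
    by (simp add: sum8 de_all de_all[simplified] ecov_evec ix_def zs algebra_simps)
  have h24_6: "-3 * M 1 2 * M 4 4 - M 2 2 * M 5 4 + 2 * M 3 2 * M 5 4 + M 6 7 = 0"
    using hom_comp[OF lin hom, of 6 "evec 2" "evec 4"] unfolding M_def sum8
    by (simp add: sum8 de_all de_all[simplified] ecov_evec ix_def zs algebra_simps)
  have h24_7: "- M 1 2 * M 5 4 - M 2 2 * M 4 4 - 2 * M 3 2 * M 4 4 + M 7 7 = 0"
    using hom_comp[OF lin hom, of 7 "evec 2" "evec 4"] unfolding M_def sum8
    by (simp add: sum8 de_all de_all[simplified] ecov_evec ix_def zs algebra_simps)
  have h24_8: "2 * M 1 2 * M 4 4 - M 1 2 * M 6 4 + 2 * M 2 2 * M 5 4 - M 2 2 * M 7 4 + 2 * M 4 2 * M 5 4 - 2 * M 4 4 * M 5 2 + M 8 7 = 0"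
    using hom_comp[OF lin hom, of 8 "evec 2" "evec 4"] unfolding M_def sum8
    by (simp add: sum8 de_all de_all[simplified] ecov_evec ix_def zs algebra_simps)
  have h25_6: "-3 * M 1 2 * M 4 5 - M 2 2 * M 5 5 + 2 * M 3 2 * M 5 5 + M 6 6 = 0"
    using hom_comp[OF lin hom, of 6 "evec 2" "evec 5"] unfolding M_def sum8
    by (simp add: sum8 de_all de_all[simplified] ecov_evec ix_def zs algebra_simps)
  have h25_7: "- M 1 2 * M 5 5 - M 2 2 * M 4 5 - 2 * M 3 2 * M 4 5 + M 7 6 = 0"
    using hom_comp[OF lin hom, of 7 "evec 2" "evec 5"] unfolding M_def sum8
    by (simp add: sum8 de_all de_all[simplified] ecov_evec ix_def zs algebra_simps)
  have h25_8: "2 * M 1 2 * M 4 5 - M 1 2 * M 6 5 + 2 * M 2 2 * M 5 5 - M 2 2 * M 7 5 + 2 * M 4 2 * M 5 5 - 2 * M 4 5 * M 5 2 + M 8 6 - 2 * M 8 8 = 0"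
    using hom_comp[OF lin hom, of 8 "evec 2" "evec 5"] unfolding M_def sum8
    by (simp add: sum8 de_all de_all[simplified] ecov_evec ix_def zs algebra_simps)
  have h26_8: "- M 1 2 * M 6 6 - M 2 2 * M 7 6 = 0"
    using hom_comp[OF lin hom, of 8 "evec 2" "evec 6"] unfolding M_def sum8
    by (simp add: sum8 de_all de_all[simplified] ecov_evec ix_def zs algebra_simps)
  have h27_8: "- M 1 2 * M 6 7 - M 2 2 * M 7 7 + M 8 8 = 0"
    using hom_comp[OF lin hom, of 8 "evec 2" "evec 7"] unfolding M_def sum8
    by (simp add: sum8 de_all de_all[simplified] ecov_evec ix_def zs algebra_simps)
  have h34_6: "-3 * M 1 3 * M 4 4 - M 2 3 * M 5 4 + 2 * M 3 3 * M 5 4 + 2 * M 6 7 = 0"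
    using hom_comp[OF lin hom, of 6 "evec 3" "evec 4"] unfolding M_def sum8
    by (simp add: sum8 de_all de_all[simplified] ecov_evec ix_def zs algebra_simps)
  have h34_7: "- M 1 3 * M 5 4 - M 2 3 * M 4 4 - 2 * M 3 3 * M 4 4 + 2 * M 7 7 = 0"
    using hom_comp[OF lin hom, of 7 "evec 3" "evec 4"] unfolding M_def sum8
    by (simp add: sum8 de_all de_all[simplified] ecov_evec ix_def zs algebra_simps)
  have h34_8: "2 * M 1 3 * M 4 4 - M 1 3 * M 6 4 + 2 * M 2 3 * M 5 4 - M 2 3 * M 7 4 + 2 * M 4 3 * M 5 4 - 2 * M 4 4 * M 5 3 + 2 * M 8 7 = 0"
    using hom_comp[OF lin hom, of 8 "evec 3" "evec 4"] unfolding M_def sum8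
    by (simp add: sum8 de_all de_all[simplified] ecov_evec ix_def zs algebra_simps)
  have h35_6: "-3 * M 1 3 * M 4 5 - M 2 3 * M 5 5 + 2 * M 3 3 * M 5 5 - 2 * M 6 6 = 0"
    using hom_comp[OF lin hom, of 6 "evec 3" "evec 5"] unfolding M_def sum8
    by (simp add: sum8 de_all de_all[simplified] ecov_evec ix_def zs algebra_simps)
  have h35_7: "- M 1 3 * M 5 5 - M 2 3 * M 4 5 - 2 * M 3 3 * M 4 5 - 2 * M 7 6 = 0"
    using hom_comp[OF lin hom, of 7 "evec 3" "evec 5"] unfolding M_def sum8
    by (simp add: sum8 de_all de_all[simplified] ecov_evec ix_def zs algebra_simps)
  have h35_8: "2 * M 1 3 * M 4 5 - M 1 3 * M 6 5 + 2 * M 2 3 * M 5 5 - M 2 3 * M 7 5 + 2 * M 4 3 * M 5 5 - 2 * M 4 5 * M 5 3 - 2 * M 8 6 = 0"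
    using hom_comp[OF lin hom, of 8 "evec 3" "evec 5"] unfolding M_def sum8
    by (simp add: sum8 de_all de_all[simplified] ecov_evec ix_def zs algebra_simps)
  have h36_8: "- M 1 3 * M 6 6 - M 2 3 * M 7 6 = 0"
    using hom_comp[OF lin hom, of 8 "evec 3" "evec 6"] unfolding M_def sum8
    by (simp add: sum8 de_all de_all[simplified] ecov_evec ix_def zs algebra_simps)
  have h37_8: "- M 1 3 * M 6 7 - M 2 3 * M 7 7 = 0"
    using hom_comp[OF lin hom, of 8 "evec 3" "evec 7"] unfolding M_def sum8
    by (simp add: sum8 de_all de_all[simplified] ecov_evec ix_def zs algebra_simps)
  have h45_8: "2 * M 4 4 * M 5 5 - 2 * M 4 5 * M 5 4 - 2 * M 8 8 = 0"
    using hom_comp[OF lin hom, of 8 "evec 4" "evec 5"] unfolding M_def sum8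
    by (simp add: sum8 de_all de_all[simplified] ecov_evec ix_def zs algebra_simps)
  show ?thesis
    by (rule alg[where m11v="M 1 1" and m12v="M 1 2" and m13v="M 1 3" and m21v="M 2 1" and m22v="M 2 2" and m23v="M 2 3" and m31v="M 3 1" and m32v="M 3 2" and m33v="M 3 3" and m41v="M 4 1" and m42v="M 4 2" and m43v="M 4 3" and m44v="M 4 4" and m45v="M 4 5" and m51v="M 5 1" and m52v="M 5 2" and m53v="M 5 3" and m54v="M 5 4" and m55v="M 5 5" and m64v="M 6 4" and m65v="M 6 5" and m66v="M 6 6" and m67v="M 6 7" and m74v="M 7 4" and m75v="M 7 5" and m76v="M 7 6" and m77v="M 7 7" and m86v="M 8 6" and m87v="M 8 7" and m88v="M 8 8", OF h12_4 h12_5 h12_6 h12_7 h13_4 h13_5 h13_6 h13_7 h14_6 h14_7 h14_8 h15_6 h15_7 h15_8 h16_8 h17_8 h23_4 h23_5 h23_6 h23_7 h24_6 h24_7 h24_8 h25_6 h25_7 h25_8 h26_8 h27_8 h34_6 h34_7 h34_8 h35_6 h35_7 h35_8 h36_8 h37_8 h45_8 d a0 b0])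
qed


definition Jc :: "real^8 \<Rightarrow> real^8" where
  "Jc x = ecov 1 x *\<^sub>R evec 2 - ecov 2 x *\<^sub>R evec 1 + ecov 4 x *\<^sub>R evec 5 - ecov 5 x *\<^sub>R evec 4
    + ecov 6 x *\<^sub>R evec 7 - ecov 7 x *\<^sub>R evec 6 + ecov 3 x *\<^sub>R evec 8 - ecov 8 x *\<^sub>R evec 3"

lemma Jc_c: "ecov 1 (Jc x) = - ecov 2 x" "ecov 2 (Jc x) = ecov 1 x" "ecov 3 (Jc x) = - ecov 8 x"
  "ecov 4 (Jc x) = - ecov 5 x" "ecov 5 (Jc x) = ecov 4 x" "ecov 6 (Jc x) = - ecov 7 x"
  "ecov 7 (Jc x) = ecov 6 x" "ecov 8 (Jc x) = ecov 3 x"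
  by (simp_all add: Jc_def ecov_evec ix_def)

lemmas Jc_cs = Jc_c Jc_c[simplified]

lemma Jc_cs_ok: "complex_structure (br a) Jc"
  unfolding complex_structure_def
proof (intro conjI allI)
  show "linear Jc"
  proof (rule linearI)
    fix x y :: "real^8" and c :: real
    show "Jc (x + y) = Jc x + Jc y" by (rule vec8_eqI) (simp_all add: Jc_cs)
    show "Jc (c *\<^sub>R x) = c *\<^sub>R Jc x" by (rule vec8_eqI) (simp_all add: Jc_cs)
  qed
  fix x :: "real^8"
  show "Jc (Jc x) = - x" by (rule vec8_eqI) (simp_all add: Jc_cs)
next
  fix X Y :: "real^8"
  show "nijenhuis (br a) Jc X Y = 0"
    unfolding nijenhuis_def
    by (rule vec8_eqI) (simp_all add: Jc_cs br_c de_all br_c[simplified] de_all[simplified] algebra_simps)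
qed

theorem theorem3p2:
  shows "(\<forall>a::real. a \<ge> 0 \<longrightarrow> nilpotent_lie (br a))
       \<and> (\<forall>a b::real. a \<ge> 0 \<longrightarrow> b \<ge> 0 \<longrightarrow> a \<noteq> b \<longrightarrow> \<not> lie_isomorphic (br a) (br b))
       \<and> (\<forall>a::real. a \<ge> 0 \<longrightarrow> (\<exists>J. complex_structure (br a) J))"
  using nilp noniso Jc_cs_ok by blast

end
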